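(* Let $L,J\ge0$ and let $Q_{\ell,j}(x)$, $0\le\ell\le L$, $0\le j\le J$, be polynomials with nonnegative coefficients, with the associated allowed weighted paths and the generating functions $F^{[\ge k]}_{k_1,k_2}(x)$, $A_{k,i}(x)$, $\overline A_{k,i}(x)$, $q^{(k)}_h(x)$, $\overline d_k$, $\underline d_k$ as defined in the context. Then: (a) for $k\le k_1$: $F^{[\ge k]}_{k_1,k_1}(x)=1+\sum_{m=k}^{k_1}\overline A_{k_1,k_1-m}(x)F^{[\ge k]}_{m,k_1}(x)$; (b) for $k\le k_1<k_2$: $F^{[\ge k]}_{k_1,k_2}(x)=\sum_{m=k}^{k_1}\overline A_{k_1,k_1-m}(x)F^{[\ge k]}_{m,k_2}(x)+\sum_{m=k_1+1}^{k_2}A_{k_1,m-k_1}(x)F^{[\ge m]}_{m,k_2}(x)$; (c) for $k\le k_2<k_1$: $F^{[\ge k]}_{k_1,k_2}(x)=\sum_{m=k}^{k_1}\overline A_{k_1,k_1-m}(x)F^{[\ge k]}_{m,k_2}(x)$; (d) for $k\ge0$ and $0\le i\le\overline d_k$: \[ A_{k,i}(x)=q^{(k)}_i(x)+\sum_{i_1>i,\ i_2>i}q^{(k)}_{i_1}(x)\,F^{[\ge k+i+1]}_{k+i_1,k+i_2}(x)\,q^{(k+i_2)}_{-(i_2-i)}(x); \] (e) for $k\ge0$ and $0\le i\le\underline d_k$: \[ \overline A_{k,i}(x)=q^{(k)}_{-i}(x)+\sum_{i_1>0,\ i_2>0}q^{(k)}_{i_1}(x)\,F^{[\ge k+1]}_{k+i_1,k+i_2}(x)\,q^{(k+i_2)}_{-(i+i_2)}(x).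 \]
   Context: Step model: for each level $h\ge0$, the multiset $\mathcal S_h$ contains, for every triple $(\ell,j,r)$ with $0\le\ell\le L$, $0\le j\le\min(h,J)$, $r\ge0$, $[x^r]Q_{\ell,j}(x)\ne0$, one labelled step of displacement $(1+r,\ell-j)$ and weight $[x^r]Q_{\ell,j}(x)$ (distinct triples give distinct steps). An allowed path starting at level $k_1$ is a finite sequence of labelled steps $s_1\cdots s_M$ ($M\ge0$) starting at the point $(0,k_1)$ such that each step belongs to $\mathcal S_h$, $h$ being the level (second coordinate) of its starting point; its weight $w(p)$ is the product of the step weights (empty path: weight $1$). For $k_1,k_2\ge0$ and $0\le k\le\min(k_1,k_2)$, $F^{[\ge k]}_{k_1,k_2}(x)=\sum_{n\ge0}\sum_p w(p)x^n$, summed over allowed paths $p$ from $(0,k_1)$ to $(n,k_2)$ all of whose points have level $\ge k$. For $k,i\ge0$, $A_{k,i}(x)=\sum_{n>0}\sum_p w(p)x^n$ over allowed paths from $(0,k)$ to $(n,k+i)$ with at least one step whose points other than the first and the last all have level strictly greater than $k+i$ (prime walks). For $0\le i\le k$, $\overline A_{k,i}(x)=\sum_{n>0}\sum_pw(p)x^n$ over allowed paths from $(0,k)$ to $(n,k-i)$ with at least one step whose points other than the first and the last all have level strictly greater than $k$ (reverse prime walks). For $k\ge0$, $\overline d_k=\max\{\ell-j:0\le\ell\le L,\ 0\le j\le\min(k,J),\ Q_{\ell,j}\ne0\}$ and $\underline d_k=\max\{j-\ell:0\le\ell\le L,\ 0\le j\le\min(k,J),\ Q_{\ell,j}\ne0\}$.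 For an integer $h$ and a level $k\ge0$, $q^{(k)}_h(x)=x\sum Q_{\ell,j}(x)$, the sum over $0\le\ell\le L$, $0\le j\le\min(k,J)$ with $\ell-j=h$ (an empty sum is $0$). *)

theory Defs
  imports "HOL-Computational_Algebra.Computational_Algebra"
begin

text \<open>A labelled step is a triple (l, j, r): displacement (1 + r, l - j),
  weight coeff (Q l j) r.  Paths are lists of labelled steps; levels are integers.\<close>

type_synonym step = "nat \<times> nat \<times> nat"

fun step_ok :: "(nat \<Rightarrow> nat \<Rightarrow> real poly) \<Rightarrow> nat \<Rightarrow> nat \<Rightarrow> int \<Rightarrow> step \<Rightarrow> bool" where
  "step_ok Q L J h (l, j, r) \<longleftrightarrow>
     l \<le> L \<and> 0 \<le> h \<and> int j \<le> min h (int J) \<and> coeff (Q l j) r \<noteq> 0"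

fun levels :: "int \<Rightarrow> step list \<Rightarrow> int list" where
  "levels h [] = [h]"
| "levels h ((l, j, r) # ps) = h # levels (h + int l - int j) ps"

fun allowed :: "(nat \<Rightarrow> nat \<Rightarrow> real poly) \<Rightarrow> nat \<Rightarrow> nat \<Rightarrow> int \<Rightarrow> step list \<Rightarrow> bool" where
  "allowed Q L J h [] = True"
| "allowed Q L J h ((l, j, r) # ps) \<longleftrightarrow>
     step_ok Q L J h (l, j, r) \<and> allowed Q L J (h + int l - int j) ps"

definition plen :: "step list \<Rightarrow> nat" where
  "plen p = (\<Sum>s\<leftarrow>p. 1 + snd (snd s))"

definition pweight :: "(nat \<Rightarrow> nat \<Rightarrow> real poly) \<Rightarrow> step list \<Rightarrow> real" where
  "pweight Q p = (\<Prod>s\<leftarrow>p. coeff (Q (fst s) (fst (snd s))) (snd (snd s)))"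

definition Fge :: "(nat \<Rightarrow> nat \<Rightarrow> real poly) \<Rightarrow> nat \<Rightarrow> nat \<Rightarrow> nat \<Rightarrow> nat \<Rightarrow> nat \<Rightarrow> real fps" where
  "Fge Q L J k k1 k2 = Abs_fps (\<lambda>n.
     \<Sum>p | allowed Q L J (int k1) p \<and> plen p = n \<and>
           last (levels (int k1) p) = int k2 \<and>
           (\<forall>h\<in>set (levels (int k1) p). int k \<le> h). pweight Q p)"

definition Aprime :: "(nat \<Rightarrow> nat \<Rightarrow> real poly) \<Rightarrow> nat \<Rightarrow> nat \<Rightarrow> nat \<Rightarrow> nat \<Rightarrow> real fps" where
  "Aprime Q L J k i = Abs_fps (\<lambda>n. if n = 0 then 0 else
     \<Sum>p | allowed Q L J (int k) p \<and> p \<noteq> [] \<and> plen p = n \<and>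
           last (levels (int k) p) = int k + int i \<and>
           (\<forall>t. 0 < t \<and> t < length p \<longrightarrow> levels (int k) p ! t > int k + int i). pweight Q p)"

text \<open>overline A_{k,i}(x): reverse prime walks (meaningful for i <= k)\<close>
definition Abar :: "(nat \<Rightarrow> nat \<Rightarrow> real poly) \<Rightarrow> nat \<Rightarrow> nat \<Rightarrow> nat \<Rightarrow> nat \<Rightarrow> real fps" where
  "Abar Q L J k i = Abs_fps (\<lambda>n. if n = 0 then 0 else
     \<Sum>p | allowed Q L J (int k) p \<and> p \<noteq> [] \<and> plen p = n \<and>
           last (levels (int k) p) = int k - int i \<and>
           (\<forall>t. 0 < t \<and> t < length p \<longrightarrow> levels (int k) p ! t > int k). pweight Q p)"

definition dup :: "(nat \<Rightarrow> nat \<Rightarrow> real poly) \<Rightarrow> nat \<Rightarrow> nat \<Rightarrow> nat \<Rightarrow> int" where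
  "dup Q L J k = Max {int l - int j | l j. l \<le> L \<and> j \<le> min k J \<and> Q l j \<noteq> 0}"

definition ddown :: "(nat \<Rightarrow> nat \<Rightarrow> real poly) \<Rightarrow> nat \<Rightarrow> nat \<Rightarrow> nat \<Rightarrow> int" where
  "ddown Q L J k = Max {int j - int l | l j. l \<le> L \<and> j \<le> min k J \<and> Q l j \<noteq> 0}"

definition qk :: "(nat \<Rightarrow> nat \<Rightarrow> real poly) \<Rightarrow> nat \<Rightarrow> nat \<Rightarrow> nat \<Rightarrow> int \<Rightarrow> real fps" where
  "qk Q L J k h = fps_X * fps_of_poly
     (\<Sum>(l, j) \<in> {(l, j). l \<le> L \<and> j \<le> min k J \<and> int l - int j = h}. Q l j)"

end

theory Submission
  imports Defs
begin

fun nxt :: "int \<Rightarrow> step \<Rightarrow> int" where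
  "nxt h (l, j, r) = h + int l - int j"

definition endl :: "int \<Rightarrow> step list \<Rightarrow> int" where
  "endl h p = last (levels h p)"

definition ilev :: "int \<Rightarrow> step list \<Rightarrow> int set" where
  "ilev h p = set (butlast (tl (levels h p)))"

definition tlset :: "int \<Rightarrow> step list \<Rightarrow> int set" where
  "tlset h p = set (tl (levels h p))"

lemma levels_Cons: "levels h (s # p) = h # levels (nxt h s) p"
  by (cases s) auto

lemma levels_ne[simp]: "levels h p \<noteq> []"
  by (cases p) (auto simp: levels_Cons)

lemma hd_levels[simp]: "hd (levels h p) = h"
  by (cases p) (auto simp: levels_Cons)

lemma length_levels[simp]: "length (levels h p) = Suc (length p)"
  by (induction p arbitrary: h) (auto simp: levels_Cons)

lemma endl_Nil[simp]: "endl h [] = h" by (simp add: endl_def)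
lemma endl_Cons[simp]: "endl h (s # p) = endl (nxt h s) p"
  by (simp add: endl_def levels_Cons)

lemma levels_append: "levels h (p @ q) = butlast (levels h p) @ levels (endl h p) q"
  by (induction p arbitrary: h) (auto simp: levels_Cons)

lemma endl_append[simp]: "endl h (p @ q) = endl (endl h p) q"
  by (induction p arbitrary: h) auto

lemma allowed_Cons: "allowed Q L J h (s # p) = (step_ok Q L J h s \<and> allowed Q L J (nxt h s) p)"
  by (cases s) auto

lemma allowed_append: "allowed Q L J h (p @ q) = (allowed Q L J h p \<and> allowed Q L J (endl h p) q)"
  by (induction p arbitrary: h) (auto simp: allowed_Cons)

lemma endl_in_levels: "endl h p \<in> set (levels h p)"
  by (simp add: endl_def)

lemma h_in_levels: "h \<in> set (levels h p)"
  using hd_in_set[OF levels_ne, of h p] by simp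

lemma set_levels_append: "set (levels h (p @ q)) = set (levels h p) \<union> set (levels (endl h p) q)"
proof -
  have e: "levels h p = butlast (levels h p) @ [endl h p]" by (simp add: endl_def)
  have "set (levels h p) = set (butlast (levels h p)) \<union> {endl h p}"
    by (subst e) simp
  then show ?thesis using h_in_levels[of "endl h p" q] by (auto simp: levels_append)
qed

lemma tlset_Nil[simp]: "tlset h [] = {}" by (simp add: tlset_def)
lemma tlset_Cons: "tlset h (s # p) = set (levels (nxt h s) p)"
  by (simp add: tlset_def levels_Cons)
lemma set_levels_tlset: "set (levels h p) = insert h (tlset h p)"
  by (cases p) (auto simp: tlset_def levels_Cons)
lemma endl_in_tlset: "p \<noteq> [] \<Longrightarrow> endl h p \<in> tlset h p"
  by (cases p) (auto simp: tlset_Cons endl_in_levels)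
lemma tlset_append: "tlset h (p @ q) = tlset h p \<union> tlset (endl h p) q"
proof (induction p arbitrary: h)
  case Nil then show ?case by simp
next
  case (Cons s p)
  show ?case
    using endl_in_levels[of "nxt h s" p] set_levels_tlset[of "endl (nxt h s) p" q]
    by (auto simp: tlset_Cons set_levels_append)
qed

lemma inter_Nil[simp]: "ilev h [] = {}" by (simp add: ilev_def)
lemma inter_single[simp]: "ilev h [s] = {}" by (simp add: ilev_def levels_Cons)
lemma inter_Cons: "p \<noteq> [] \<Longrightarrow> ilev h (s # p) = insert (nxt h s) (ilev (nxt h s) p)"
  by (cases p) (auto simp: ilev_def levels_Cons)
lemma tlset_inter: "p \<noteq> [] \<Longrightarrow> tlset h p = insert (endl h p) (ilev h p)"
proof (induction p arbitrary: h)
  case Nil then show ?case by simp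
next
  case (Cons s p)
  show ?case
  proof (cases "p = []")
    case True then show ?thesis by (simp add: tlset_Cons)
  next
    case False
    then show ?thesis using Cons.IH[of "nxt h s"]
      by (simp add: tlset_Cons inter_Cons set_levels_tlset insert_commute)
  qed
qed

lemma inter_append: "a \<noteq> [] \<Longrightarrow> b \<noteq> [] \<Longrightarrow> ilev h (a @ b) = ilev h a \<union> {endl h a} \<union> ilev (endl h a) b"
proof (induction a arbitrary: h)
  case Nil then show ?case by simp
next
  case (Cons s a)
  show ?case
  proof (cases "a = []")
    case True then show ?thesis using Cons by (simp add: inter_Cons)
  next
    case False
    then show ?thesis using Cons by (auto simp: inter_Cons)
  qed
qed

lemma inter_mid: "ilev h (s1 # mid @ [s2]) = set (levels (nxt h s1) mid)"
proof (cases "mid = []")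
  case True then show ?thesis by (simp add: inter_Cons)
next
  case False
  then show ?thesis
    by (simp add: inter_Cons inter_append set_levels_tlset tlset_inter)
qed

lemma inter_conv:
  "(\<forall>t. 0 < t \<and> t < length p \<longrightarrow> c < levels h p ! t) \<longleftrightarrow> (\<forall>x\<in>ilev h p. c < x)"
proof -
  have len: "length (butlast (tl (levels h p))) = length p - 1" by simp
  have nth: "\<And>t. t < length p - 1 \<Longrightarrow> butlast (tl (levels h p)) ! t = levels h p ! Suc t"
    by (simp add: nth_butlast nth_tl)
  show ?thesis
  proof
    assume H: "\<forall>t. 0 < t \<and> t < length p \<longrightarrow> c < levels h p ! t"
    show "\<forall>x\<in>ilev h p. c < x"
    proof
      fix x assume "x \<in> ilev h p"
      then obtain t where "t < length p - 1" "x = butlast (tl (levels h p)) ! t"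
        unfolding ilev_def in_set_conv_nth len by auto
      then show "c < x" using H nth by auto
    qed
  next
    assume H: "\<forall>x\<in>ilev h p. c < x"
    show "\<forall>t. 0 < t \<and> t < length p \<longrightarrow> c < levels h p ! t"
    proof (intro allI impI)
      fix t assume t: "0 < t \<and> t < length p"
      then obtain t' where t': "t = Suc t'" by (cases t) auto
      then have "t' < length p - 1" using t by simp
      then have "levels h p ! t \<in> ilev h p"
        unfolding ilev_def in_set_conv_nth len using nth t' by metis
      then show "c < levels h p ! t" using H by auto
    qed
  qed
qed

lemma first_hit:
  "\<exists>x\<in>tlset h u. P x \<Longrightarrow> \<exists>p q. u = p @ q \<and> p \<noteq> [] \<and> P (endl h p) \<and> (\<forall>x\<in>ilev h p. \<not> P x)"
proof (induction u arbitrary: h)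
  case Nil then show ?case by simp
next
  case (Cons s u)
  show ?case
  proof (cases "P (nxt h s)")
    case True
    then show ?thesis by (intro exI[of _ "[s]"] exI[of _ u]) auto
  next
    case False
    then have "\<exists>x\<in>tlset (nxt h s) u. P x"
      using Cons.prems by (auto simp: tlset_Cons set_levels_tlset)
    from Cons.IH[OF this] obtain p q where pq: "u = p @ q" "p \<noteq> []" "P (endl (nxt h s) p)"
      "\<forall>x\<in>ilev (nxt h s) p. \<not> P x" by blast
    show ?thesis
      by (rule exI[of _ "s # p"], rule exI[of _ q]) (use pq False in \<open>auto simp: inter_Cons\<close>)
  qed
qed

lemma endl_in_inter: "a \<noteq> [] \<Longrightarrow> b \<noteq> [] \<Longrightarrow> endl h a \<in> ilev h (a @ b)"
  by (simp add: inter_append)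

lemma first_hit_unique:
  assumes "p @ q = p' @ q'" "p \<noteq> []" "p' \<noteq> []" "P (endl h p)" "P (endl h p')"
    "\<forall>x\<in>ilev h p. \<not> P x" "\<forall>x\<in>ilev h p'. \<not> P x"
  shows "p = p' \<and> q = q'"
proof -
  from assms(1) obtain us where
    "(p = p' @ us \<and> us @ q = q') \<or> (p @ us = p' \<and> q = us @ q')"
    by (auto simp: append_eq_append_conv2)
  then show ?thesis
  proof
    assume A: "p = p' @ us \<and> us @ q = q'"
    show ?thesis
    proof (cases "us = []")
      case True then show ?thesis using A by simp
    next
      case False
      then have "endl h p' \<in> ilev h p" using A assms(3) endl_in_inter by blast
      then show ?thesis using assms by blast
    qed
  next
    assume A: "p @ us = p' \<and> q = us @ q'"
    show ?thesis
    proof (cases "us = []")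
      case True then show ?thesis using A by simp
    next
      case False
      then have "endl h p \<in> ilev h p'" using A assms(2) endl_in_inter by blast
      then show ?thesis using assms by blast
    qed
  qed
qed



definition Good :: "nat \<Rightarrow> nat \<Rightarrow> step list set" where
  "Good L J = {p. \<forall>s\<in>set p. fst s \<le> L \<and> fst (snd s) \<le> J}"

lemma Good_append: "p \<in> Good L J \<Longrightarrow> q \<in> Good L J \<Longrightarrow> p @ q \<in> Good L J"
  by (auto simp: Good_def)

lemma length_le_plen: "length p \<le> plen p"
  by (induction p) (auto simp: plen_def)
lemma r_lt_plen: "s \<in> set p \<Longrightarrow> snd (snd s) < plen p"
  by (induction p) (auto simp: plen_def)
lemma plen_append[simp]: "plen (p @ q) = plen p + plen q" by (simp add: plen_def)
lemma plen_Nil[simp]: "plen [] = 0" by (simp add: plen_def)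
lemma plen_single[simp]: "plen [(l, j, r)] = Suc r" by (simp add: plen_def)
lemma pweight_append[simp]: "pweight Q (p @ q) = pweight Q p * pweight Q q" by (simp add: pweight_def)
lemma pweight_Nil[simp]: "pweight Q [] = 1" by (simp add: pweight_def)
lemma pweight_single[simp]: "pweight Q [(l, j, r)] = coeff (Q l j) r" by (simp add: pweight_def)
lemma plen_pos: "p \<noteq> [] \<Longrightarrow> 0 < plen p"
  using length_le_plen[of p] by (cases p) auto

lemma finite_slice: "finite {p \<in> Good L J. plen p = n}"
proof (rule finite_subset)
  show "{p \<in> Good L J. plen p = n} \<subseteq> {xs. set xs \<subseteq> {..L} \<times> {..J} \<times> {..<n} \<and> length xs \<le> n}"
    using length_le_plen r_lt_plen by (fastforce simp: Good_def)
  show "finite {xs. set xs \<subseteq> {..L} \<times> {..J} \<times> {..<n} \<and> length xs \<le> n}"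
    by (intro finite_lists_length_le) auto
qed

lemma finite_slice_le: "finite {p \<in> Good L J. plen p \<le> n}"
proof -
  have "{p \<in> Good L J. plen p \<le> n} = (\<Union>a\<in>{..n}. {p \<in> Good L J. plen p = a})" by auto
  then show ?thesis using finite_slice by simp
qed

lemma allowed_Good: "allowed Q L J h p \<Longrightarrow> p \<in> Good L J"
proof (induction p arbitrary: h)
  case Nil then show ?case by (simp add: Good_def)
next
  case (Cons s p)
  obtain l j r where s: "s = (l, j, r)" by (cases s)
  show ?case using Cons s by (auto simp: Good_def allowed_Cons)
qed

definition gf :: "(nat \<Rightarrow> nat \<Rightarrow> real poly) \<Rightarrow> step list set \<Rightarrow> real fps" where
  "gf Q S = Abs_fps (\<lambda>n. \<Sum>p\<in>{p\<in>S. plen p = n}. pweight Q p)"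

lemma gf_nth: "gf Q S $ n = (\<Sum>p\<in>{p\<in>S. plen p = n}. pweight Q p)" by (simp add: gf_def)

lemma gf_empty: "gf Q {} = 0" by (rule fps_ext) (simp add: gf_nth)

lemma gf_Nil: "gf Q {[]} = 1"
proof (rule fps_ext)
  fix n
  have "{p \<in> {[]}. plen p = n} = (if n = 0 then {[]} else {})" by auto
  then show "gf Q {[]} $ n = 1 $ n" by (simp add: gf_nth)
qed

lemma gf_union:
  assumes "A \<subseteq> Good L J" "B \<subseteq> Good L J" "A \<inter> B = {}"
  shows "gf Q (A \<union> B) = gf Q A + gf Q B"
proof (rule fps_ext)
  fix n
  have e: "{p \<in> A \<union> B. plen p = n} = {p \<in> A. plen p = n} \<union> {p \<in> B. plen p = n}" by auto
  have fA: "finite {p \<in> A. plen p = n}" using assms(1) by (rule_tac finite_subset[OF _ finite_slice[of L J n]]) auto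
  have fB: "finite {p \<in> B. plen p = n}" using assms(2) by (rule_tac finite_subset[OF _ finite_slice[of L J n]]) auto
  show "gf Q (A \<union> B) $ n = (gf Q A + gf Q B) $ n"
    unfolding gf_nth fps_add_nth e using assms(3) by (intro sum.union_disjoint fA fB) auto
qed

lemma gf_UN:
  assumes "finite I" "\<forall>i\<in>I. U i \<subseteq> Good L J" "\<forall>i\<in>I. \<forall>j\<in>I. i \<noteq> j \<longrightarrow> U i \<inter> U j = {}"
  shows "gf Q (\<Union>i\<in>I. U i) = (\<Sum>i\<in>I. gf Q (U i))"
  using assms
proof (induction I rule: finite_induct)
  case empty then show ?case by (simp add: gf_empty)
next
  case (insert x F)
  have "gf Q (\<Union>i\<in>insert x F. U i) = gf Q (U x \<union> (\<Union>i\<in>F. U i))" by simp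
  also have "\<dots> = gf Q (U x) + gf Q (\<Union>i\<in>F. U i)"
    using insert by (intro gf_union[of _ L J]) auto
  also have "\<dots> = gf Q (U x) + (\<Sum>i\<in>F. gf Q (U i))"
    using insert by simp
  finally show ?case using insert by simp
qed

abbreviation cat :: "step list \<times> step list \<Rightarrow> step list" where
  "cat \<equiv> (\<lambda>(p, q). p @ q)"

lemma gf_mult:
  assumes S: "S \<subseteq> Good L J" and T: "T \<subseteq> Good L J" and inj: "inj_on cat (S \<times> T)"
  shows "gf Q (cat ` (S \<times> T)) = gf Q S * gf Q T"
proof (rule fps_ext)
  fix n
  define P where "P = {x \<in> S \<times> T. plen (fst x) + plen (snd x) = n}"
  have finP: "finite P"
  proof (rule finite_subset)
    show "P \<subseteq> {p \<in> Good L J. plen p \<le> n} \<times> {p \<in> Good L J. plen p \<le> n}"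
      using S T by (auto simp: P_def)
    show "finite ({p \<in> Good L J. plen p \<le> n} \<times> {p \<in> Good L J. plen p \<le> n})"
      using finite_slice_le by blast
  qed
  have fS: "\<And>a. finite {p \<in> S. plen p = a}"
    using S by (rule_tac finite_subset[OF _ finite_slice[of L J]]) auto
  have fT: "\<And>a. finite {p \<in> T. plen p = a}"
    using T by (rule_tac finite_subset[OF _ finite_slice[of L J]]) auto
  have e1: "{u \<in> cat ` (S \<times> T). plen u = n} = cat ` P"
    by (auto simp: P_def image_iff)
  have "gf Q (cat ` (S \<times> T)) $ n = (\<Sum>u\<in>cat ` P. pweight Q u)"
    by (simp add: gf_nth e1)
  also have "\<dots> = (\<Sum>x\<in>P. pweight Q (cat x))"
    by (rule sum.reindex_cong[where l=cat]) (auto intro: inj_on_subset[OF inj] simp: P_def)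
  also have "\<dots> = (\<Sum>a\<in>{..n}. \<Sum>x\<in>{x. x \<in> P \<and> plen (fst x) = a}. pweight Q (cat x))"
    by (rule sum.group[symmetric, OF finP]) (auto simp: P_def)
  also have "\<dots> = (\<Sum>a\<in>{..n}. (\<Sum>p\<in>{p\<in>S. plen p = a}. pweight Q p) * (\<Sum>q\<in>{q\<in>T. plen q = n - a}. pweight Q q))"
  proof (rule sum.cong[OF refl])
    fix a assume a: "a \<in> {..n}"
    have "{x. x \<in> P \<and> plen (fst x) = a} = {p\<in>S. plen p = a} \<times> {q\<in>T. plen q = n - a}"
      using a by (auto simp: P_def)
    then show "(\<Sum>x\<in>{x. x \<in> P \<and> plen (fst x) = a}. pweight Q (cat x)) =
      (\<Sum>p\<in>{p\<in>S. plen p = a}. pweight Q p) * (\<Sum>q\<in>{q\<in>T. plen q = n - a}. pweight Q q)"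
      by (simp add: sum_product sum.cartesian_product case_prod_beta)
  qed
  also have "\<dots> = (gf Q S * gf Q T) $ n"
    by (simp add: fps_mult_nth gf_nth atLeast0AtMost)
  finally show "gf Q (cat ` (S \<times> T)) $ n = (gf Q S * gf Q T) $ n" .
qed

lemma cat_Good: "S \<subseteq> Good L J \<Longrightarrow> T \<subseteq> Good L J \<Longrightarrow> cat ` (S \<times> T) \<subseteq> Good L J"
  by (auto intro: Good_append)

lemma gf_UN_mult:
  assumes "finite I" "\<forall>i\<in>I. S i \<subseteq> Good L J \<and> T i \<subseteq> Good L J \<and> inj_on cat (S i \<times> T i)"
    "\<forall>i\<in>I. \<forall>j\<in>I. i \<noteq> j \<longrightarrow> cat ` (S i \<times> T i) \<inter> cat ` (S j \<times> T j) = {}"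
  shows "gf Q (\<Union>i\<in>I. cat ` (S i \<times> T i)) = (\<Sum>i\<in>I. gf Q (S i) * gf Q (T i))"
proof -
  have "gf Q (\<Union>i\<in>I. cat ` (S i \<times> T i)) = (\<Sum>i\<in>I. gf Q (cat ` (S i \<times> T i)))"
  proof -
    have G: "\<forall>i\<in>I. cat ` (S i \<times> T i) \<subseteq> Good L J" using assms(2) cat_Good by blast
    show ?thesis using G assms(1,3) by (intro gf_UN[of _ _ L J]) auto
  qed
  also have "\<dots> = (\<Sum>i\<in>I. gf Q (S i) * gf Q (T i))"
    using assms by (intro sum.cong[OF refl] gf_mult[of _ L J]) auto
  finally show ?thesis .
qed



context
  fixes Q :: "nat \<Rightarrow> nat \<Rightarrow> real poly" and L J :: nat
begin

definition FS :: "nat \<Rightarrow> nat \<Rightarrow> nat \<Rightarrow> step list set" where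
  "FS k k1 k2 = {p. allowed Q L J (int k1) p \<and> endl (int k1) p = int k2 \<and>
      (\<forall>h\<in>set (levels (int k1) p). int k \<le> h)}"

definition PW :: "nat \<Rightarrow> int \<Rightarrow> int \<Rightarrow> step list set" where
  "PW k e c = {p. allowed Q L J (int k) p \<and> p \<noteq> [] \<and> endl (int k) p = e \<and> (\<forall>x\<in>ilev (int k) p. c < x)}"

definition St :: "nat \<Rightarrow> int \<Rightarrow> step list set" where
  "St k e = {[s] | s. step_ok Q L J (int k) s \<and> nxt (int k) s = e}"

lemma FS_Good: "FS k k1 k2 \<subseteq> Good L J"
  by (auto simp: FS_def intro: allowed_Good)
lemma PW_Good: "PW k e c \<subseteq> Good L J"
  by (auto simp: PW_def intro: allowed_Good)
lemma St_Good: "St k e \<subseteq> Good L J"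
proof
  fix p assume "p \<in> St k e"
  then obtain s where "p = [s]" "step_ok Q L J (int k) s" by (auto simp: St_def)
  then have "allowed Q L J (int k) p" by (cases s) auto
  then show "p \<in> Good L J" by (rule allowed_Good)
qed

lemma Fge_gf: "Fge Q L J k k1 k2 = gf Q (FS k k1 k2)"
  unfolding Fge_def gf_def FS_def endl_def
  by (rule arg_cong[where f=Abs_fps], rule ext, rule sum.cong) auto

lemma Aprime_gf: "Aprime Q L J k i = gf Q (PW k (int k + int i) (int k + int i))"
  unfolding Aprime_def gf_def
proof (rule arg_cong[where f=Abs_fps], rule ext)
  fix n
  show "(if n = 0 then 0 else \<Sum>p | allowed Q L J (int k) p \<and> p \<noteq> [] \<and> plen p = n \<and>
           last (levels (int k) p) = int k + int i \<and>
           (\<forall>t. 0 < t \<and> t < length p \<longrightarrow> levels (int k) p ! t > int k + int i). pweight Q p)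
    = (\<Sum>p\<in>{p \<in> PW k (int k + int i) (int k + int i). plen p = n}. pweight Q p)"
  proof (cases "n = 0")
    case True
    have E0: "{p \<in> PW k (int k + int i) (int k + int i). plen p = 0} = {}"
    proof -
      { fix p assume "p \<in> PW k (int k + int i) (int k + int i)" "plen p = 0"
        then have False using plen_pos[of p] True by (auto simp: PW_def) }
      then show ?thesis by blast
    qed
    show ?thesis using True by (simp add: E0)
  next
    case False
    then show ?thesis
      by (simp, intro sum.cong) (auto simp: PW_def endl_def inter_conv)
  qed
qed

lemma Abar_gf: "Abar Q L J k i = gf Q (PW k (int k - int i) (int k))"
  unfolding Abar_def gf_def
proof (rule arg_cong[where f=Abs_fps], rule ext)
  fix n
  show "(if n = 0 then 0 else \<Sum>p | allowed Q L J (int k) p \<and> p \<noteq> [] \<and> plen p = n \<and>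
           last (levels (int k) p) = int k - int i \<and>
           (\<forall>t. 0 < t \<and> t < length p \<longrightarrow> levels (int k) p ! t > int k). pweight Q p)
    = (\<Sum>p\<in>{p \<in> PW k (int k - int i) (int k). plen p = n}. pweight Q p)"
  proof (cases "n = 0")
    case True
    have E0: "{p \<in> PW k (int k - int i) (int k). plen p = 0} = {}"
    proof -
      { fix p assume "p \<in> PW k (int k - int i) (int k)" "plen p = 0"
        then have False using plen_pos[of p] True by (auto simp: PW_def) }
      then show ?thesis by blast
    qed
    show ?thesis using True by (simp add: E0)
  next
    case False
    then show ?thesis
      by (simp, intro sum.cong) (auto simp: PW_def endl_def inter_conv)
  qed
qed

lemma qk_zero:
  assumes "\<not> (\<exists>l j. l \<le> L \<and> j \<le> min k J \<and> int l - int j = h)"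
  shows "qk Q L J k h = 0"
proof -
  have e: "{(l, j). l \<le> L \<and> j \<le> min k J \<and> int l - int j = h} = {}" using assms by auto
  show ?thesis unfolding qk_def by (subst e) simp
qed

lemma St_gf: "gf Q (St k e) = qk Q L J k (e - int k)"
proof (rule fps_ext)
  fix n
  define E where "E = {(l, j). l \<le> L \<and> j \<le> min k J \<and> int l - int j = e - int k}"
  have finE: "finite E"
    by (rule finite_subset[of _ "{..L} \<times> {..J}"]) (auto simp: E_def)
  show "gf Q (St k e) $ n = qk Q L J k (e - int k) $ n"
  proof (cases n)
    case 0
    have E0: "{p \<in> St k e. plen p = 0} = {}"
    proof -
      { fix p assume "p \<in> St k e" "plen p = 0"
        then have False using plen_pos[of p] 0 by (auto simp: St_def) }
      then show ?thesis by blast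
    qed
    show ?thesis using 0 by (simp add: gf_nth E0 qk_def)
  next
    case (Suc r)
    define D where "D = {(l, j). l \<le> L \<and> j \<le> min k J \<and> int l - int j = e - int k \<and> coeff (Q l j) r \<noteq> 0}"
    have e1: "{p \<in> St k e. plen p = n} = (\<lambda>(l, j). [(l, j, r)]) ` D"
    proof
      show "{p \<in> St k e. plen p = n} \<subseteq> (\<lambda>(l, j). [(l, j, r)]) ` D"
      proof
        fix p assume "p \<in> {p \<in> St k e. plen p = n}"
        then obtain l j r' where "p = [(l, j, r')]" "step_ok Q L J (int k) (l, j, r')"
          "nxt (int k) (l, j, r') = e" "Suc r' = n"
          by (auto simp: St_def)
        then show "p \<in> (\<lambda>(l, j). [(l, j, r)]) ` D"
          using Suc by (auto simp: D_def image_iff)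
      qed
      show "(\<lambda>(l, j). [(l, j, r)]) ` D \<subseteq> {p \<in> St k e. plen p = n}"
        using Suc by (auto simp: D_def St_def)
    qed
    have "gf Q (St k e) $ n = (\<Sum>x\<in>D. coeff (Q (fst x) (snd x)) r)"
      unfolding gf_nth e1
      by (subst sum.reindex) (auto simp: inj_on_def case_prod_beta)
    also have "\<dots> = (\<Sum>x\<in>E. coeff (Q (fst x) (snd x)) r)"
      by (rule sum.mono_neutral_left[OF finE]) (auto simp: D_def E_def)
    also have "\<dots> = qk Q L J k (e - int k) $ n"
      using Suc by (simp add: qk_def coeff_sum E_def case_prod_beta)
    finally show ?thesis .
  qed
qed

lemma down_decomp:
  assumes "k \<le> k1"
  shows "{u \<in> FS k k1 k2. \<exists>x\<in>tlset (int k1) u. x \<le> int k1} =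
    (\<Union>m\<in>{k..k1}. cat ` (PW k1 (int m) (int k1) \<times> FS k m k2))"
proof
  show "{u \<in> FS k k1 k2. \<exists>x\<in>tlset (int k1) u. x \<le> int k1} \<subseteq>
    (\<Union>m\<in>{k..k1}. cat ` (PW k1 (int m) (int k1) \<times> FS k m k2))"
  proof
    fix u assume u: "u \<in> {u \<in> FS k k1 k2. \<exists>x\<in>tlset (int k1) u. x \<le> int k1}"
    then have uF: "u \<in> FS k k1 k2" and ex: "\<exists>x\<in>tlset (int k1) u. x \<le> int k1" by auto
    from first_hit[OF ex] obtain p q where pq: "u = p @ q" "p \<noteq> []" "endl (int k1) p \<le> int k1"
      "\<forall>x\<in>ilev (int k1) p. \<not> x \<le> int k1" by blast
    define M where "M = endl (int k1) p"
    have "M \<in> set (levels (int k1) u)" using pq(1) endl_in_levels set_levels_append M_def by blast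
    then have kM: "int k \<le> M" using uF by (auto simp: FS_def)
    define m where "m = nat M"
    have mM: "int m = M" using kM m_def by simp
    have mI: "m \<in> {k..k1}" using kM pq(3) mM M_def by auto
    have uA: "allowed Q L J (int k1) p" "allowed Q L J M q"
      using uF pq(1) by (auto simp: FS_def allowed_append M_def)
    have pP: "p \<in> PW k1 (int m) (int k1)"
      using uA pq mM M_def by (auto simp: PW_def not_le)
    have qF: "q \<in> FS k m k2"
      using uA uF pq(1) mM M_def by (auto simp: FS_def set_levels_append)
    show "u \<in> (\<Union>m\<in>{k..k1}. cat ` (PW k1 (int m) (int k1) \<times> FS k m k2))"
      using mI pP qF pq(1) by blast
  qed
  show "(\<Union>m\<in>{k..k1}. cat ` (PW k1 (int m) (int k1) \<times> FS k m k2)) \<subseteq>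
     {u \<in> FS k k1 k2. \<exists>x\<in>tlset (int k1) u. x \<le> int k1}"
  proof
    fix u assume "u \<in> (\<Union>m\<in>{k..k1}. cat ` (PW k1 (int m) (int k1) \<times> FS k m k2))"
    then obtain m p q where m: "m \<in> {k..k1}" and p: "p \<in> PW k1 (int m) (int k1)"
      and q: "q \<in> FS k m k2" and u: "u = p @ q" by auto
    have pne: "p \<noteq> []" and pe: "endl (int k1) p = int m" and pa: "allowed Q L J (int k1) p"
      and pi: "\<forall>x\<in>ilev (int k1) p. int k1 < x" using p by (auto simp: PW_def)
    have lv: "set (levels (int k1) p) = insert (int k1) (insert (int m) (ilev (int k1) p))"
      using pne pe by (simp add: set_levels_tlset tlset_inter)
    have "u \<in> FS k k1 k2"
      using q m pa pe pi lv by (auto simp: u FS_def allowed_append set_levels_append)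
    moreover have "int m \<in> tlset (int k1) u"
      using endl_in_tlset[OF pne, of "int k1"] pe by (simp add: u tlset_append)
    moreover have "int m \<le> int k1" using m by simp
    ultimately show "u \<in> {u \<in> FS k k1 k2. \<exists>x\<in>tlset (int k1) u. x \<le> int k1}"
      by blast
  qed
qed

lemma up_tl:
  assumes p: "p \<in> PW k1 (int m) (int m)" and q: "q \<in> FS m m k2"
  shows "int m \<in> tlset (int k1) (p @ q) \<and> (\<forall>x\<in>tlset (int k1) (p @ q). int m \<le> x)"
proof -
  have pne: "p \<noteq> []" and pe: "endl (int k1) p = int m"
      and pi: "\<forall>x\<in>ilev (int k1) p. int m < x" using p by (auto simp: PW_def)
  have ql: "\<forall>x\<in>set (levels (int m) q). int m \<le> x" using q by (auto simp: FS_def)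
  have "tlset (int k1) (p @ q) = insert (int m) (ilev (int k1) p) \<union> tlset (int m) q"
    using pne pe by (simp add: tlset_append tlset_inter)
  moreover have "tlset (int m) q \<subseteq> set (levels (int m) q)" by (simp add: set_levels_tlset subset_insertI)
  ultimately show ?thesis using pi ql by fastforce
qed

lemma up_decomp:
  assumes "k \<le> k1"
  shows "{u \<in> FS k k1 k2. u \<noteq> [] \<and> (\<forall>x\<in>tlset (int k1) u. int k1 < x)} =
    (\<Union>m\<in>{k1+1..k2}. cat ` (PW k1 (int m) (int m) \<times> FS m m k2))"
proof
  show "{u \<in> FS k k1 k2. u \<noteq> [] \<and> (\<forall>x\<in>tlset (int k1) u. int k1 < x)} \<subseteq>
    (\<Union>m\<in>{k1+1..k2}. cat ` (PW k1 (int m) (int m) \<times> FS m m k2))"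
  proof
    fix u assume u: "u \<in> {u \<in> FS k k1 k2. u \<noteq> [] \<and> (\<forall>x\<in>tlset (int k1) u. int k1 < x)}"
    then have uF: "u \<in> FS k k1 k2" and une: "u \<noteq> []" and ab: "\<forall>x\<in>tlset (int k1) u. int k1 < x" by auto
    define M where "M = Min (tlset (int k1) u)"
    have fin: "finite (tlset (int k1) u)" by (simp add: tlset_def)
    have eu: "endl (int k1) u \<in> tlset (int k1) u" using endl_in_tlset[OF une] .
    have Min_in: "M \<in> tlset (int k1) u" using fin eu M_def by (metis Min_in empty_iff)
    have Min_le: "\<And>x. x \<in> tlset (int k1) u \<Longrightarrow> M \<le> x" using fin M_def by simp
    from first_hit[of "int k1" u "\<lambda>x. x \<le> M"] Min_in obtain p q where pq: "u = p @ q" "p \<noteq> []"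
      "endl (int k1) p \<le> M" "\<forall>x\<in>ilev (int k1) p. \<not> x \<le> M" by blast
    have "endl (int k1) p \<in> tlset (int k1) u"
      using endl_in_tlset[OF pq(2)] pq(1) by (simp add: tlset_append)
    then have peM: "endl (int k1) p = M" using Min_le pq(3) by force
    have k1M: "int k1 < M" using ab Min_in by blast
    have Mk2: "M \<le> int k2" using Min_le[OF eu] uF by (simp add: FS_def)
    define m where "m = nat M"
    have mM: "int m = M" using k1M m_def by simp
    have mI: "m \<in> {k1+1..k2}" using k1M Mk2 mM by auto
    have uA: "allowed Q L J (int k1) p" "allowed Q L J M q"
      using uF pq(1) peM by (auto simp: FS_def allowed_append)
    have pP: "p \<in> PW k1 (int m) (int m)"
      using uA pq peM mM by (auto simp: PW_def not_le)
    have "set (levels M q) = insert M (tlset M q)" by (simp add: set_levels_tlset)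
    moreover have "tlset M q \<subseteq> tlset (int k1) u" using pq(1) peM by (simp add: tlset_append)
    ultimately have "\<forall>x\<in>set (levels M q). M \<le> x" using Min_le by auto
    then have qF: "q \<in> FS m m k2"
      using uA uF pq(1) mM peM by (auto simp: FS_def)
    show "u \<in> (\<Union>m\<in>{k1+1..k2}. cat ` (PW k1 (int m) (int m) \<times> FS m m k2))"
      using mI pP qF pq(1) by blast
  qed
  show "(\<Union>m\<in>{k1+1..k2}. cat ` (PW k1 (int m) (int m) \<times> FS m m k2)) \<subseteq>
     {u \<in> FS k k1 k2. u \<noteq> [] \<and> (\<forall>x\<in>tlset (int k1) u. int k1 < x)}"
  proof
    fix u assume "u \<in> (\<Union>m\<in>{k1+1..k2}. cat ` (PW k1 (int m) (int m) \<times> FS m m k2))"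
    then obtain m p q where m: "m \<in> {k1+1..k2}" and p: "p \<in> PW k1 (int m) (int m)"
      and q: "q \<in> FS m m k2" and u: "u = p @ q" by auto
    have pne: "p \<noteq> []" and pe: "endl (int k1) p = int m" and pa: "allowed Q L J (int k1) p"
      and pi: "\<forall>x\<in>ilev (int k1) p. int m < x" using p by (auto simp: PW_def)
    have lv: "set (levels (int k1) p) = insert (int k1) (insert (int m) (ilev (int k1) p))"
      using pne pe by (simp add: set_levels_tlset tlset_inter)
    have "u \<in> FS k k1 k2"
      using q m pa pe pi lv assms by (fastforce simp: u FS_def allowed_append set_levels_append)
    moreover have "\<forall>x\<in>tlset (int k1) u. int k1 < x"
      using up_tl[OF p q] m u by fastforce
    ultimately show "u \<in> {u \<in> FS k k1 k2. u \<noteq> [] \<and> (\<forall>x\<in>tlset (int k1) u. int k1 < x)}"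
      using pne u by auto
  qed
qed

lemma inj_down:
  assumes "m \<le> k1"
  shows "inj_on cat (PW k1 (int m) (int k1) \<times> FS k m k2)"
proof (rule inj_onI)
  fix x y assume x: "x \<in> PW k1 (int m) (int k1) \<times> FS k m k2" and y: "y \<in> PW k1 (int m) (int k1) \<times> FS k m k2"
    and e: "cat x = cat y"
  obtain p q p' q' where xy: "x = (p, q)" "y = (p', q')" by (cases x, cases y)
  show "x = y"
    using first_hit_unique[of p q p' q' "\<lambda>x. x \<le> int k1" "int k1"] x y e xy assms
    by (auto simp: PW_def not_le)
qed

lemma disj_down:
  assumes "m \<le> k1" "m' \<le> k1" "m \<noteq> m'"
  shows "cat ` (PW k1 (int m) (int k1) \<times> FS k m k2) \<inter> cat ` (PW k1 (int m') (int k1) \<times> FS k m' k2) = {}"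
proof -
  { fix p q p' q'
    assume p: "p \<in> PW k1 (int m) (int k1)" and p': "p' \<in> PW k1 (int m') (int k1)" and e: "p @ q = p' @ q'"
    have "p = p'"
      using first_hit_unique[of p q p' q' "\<lambda>x. x \<le> int k1" "int k1"] p p' e assms
      by (auto simp: PW_def not_le)
    then have False using p p' assms by (auto simp: PW_def) }
  then show ?thesis by fastforce
qed

lemma inj_up:
  shows "inj_on cat (PW k1 (int m) (int m) \<times> FS m m k2)"
proof (rule inj_onI)
  fix x y assume x: "x \<in> PW k1 (int m) (int m) \<times> FS m m k2" and y: "y \<in> PW k1 (int m) (int m) \<times> FS m m k2"
    and e: "cat x = cat y"
  obtain p q p' q' where xy: "x = (p, q)" "y = (p', q')" by (cases x, cases y)
  show "x = y"
    using first_hit_unique[of p q p' q' "\<lambda>x. x \<le> int m" "int k1"] x y e xy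
    by (auto simp: PW_def not_le)
qed

lemma disj_up:
  assumes "m \<noteq> m'"
  shows "cat ` (PW k1 (int m) (int m) \<times> FS m m k2) \<inter> cat ` (PW k1 (int m') (int m') \<times> FS m' m' k2) = {}"
proof -
  { fix p q p' q'
    assume p: "p \<in> PW k1 (int m) (int m)" and q: "q \<in> FS m m k2"
      and p': "p' \<in> PW k1 (int m') (int m')" and q': "q' \<in> FS m' m' k2" and e: "p @ q = p' @ q'"
    have "int m \<le> int m'" "int m' \<le> int m"
      using up_tl[OF p q] up_tl[OF p' q'] e by metis+
    then have False using assms by simp }
  then show ?thesis by fastforce
qed

definition Mid :: "nat \<Rightarrow> nat \<Rightarrow> int \<Rightarrow> nat \<Rightarrow> nat \<Rightarrow> step list set" where
  "Mid k c0 e i1 i2 = cat ` (cat ` (St k (int (k + i1)) \<times> FS (k + c0 + 1) (k + i1) (k + i2)) \<times> St (k + i2) e)"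

definition Box :: "nat \<Rightarrow> nat \<Rightarrow> int \<Rightarrow> (nat \<times> nat) set" where
  "Box k c0 e = {(i1, i2). c0 < i1 \<and> c0 < i2 \<and> i1 \<le> L \<and> int (k + i2) \<le> e + int J}"

lemma finite_Box: "finite (Box k c0 e)"
  by (rule finite_subset[of _ "{..L} \<times> {..nat (e + int J)}"]) (auto simp: Box_def)

lemma St_mem: "p \<in> St k e \<longleftrightarrow> (\<exists>s. p = [s] \<and> step_ok Q L J (int k) s \<and> nxt (int k) s = e)"
  by (auto simp: St_def)

lemma PW_decomp:
  "PW k e (int k + int c0) = St k e \<union> (\<Union>x\<in>Box k c0 e. Mid k c0 e (fst x) (snd x))"
proof
  show "PW k e (int k + int c0) \<subseteq> St k e \<union> (\<Union>x\<in>Box k c0 e. Mid k c0 e (fst x) (snd x))"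
  proof
    fix p assume p: "p \<in> PW k e (int k + int c0)"
    then have pa: "allowed Q L J (int k) p" and pne: "p \<noteq> []" and pe: "endl (int k) p = e"
      and pi: "\<forall>x\<in>ilev (int k) p. int k + int c0 < x" by (auto simp: PW_def)
    obtain s1 p' where p1: "p = s1 # p'" using pne by (cases p) auto
    show "p \<in> St k e \<union> (\<Union>x\<in>Box k c0 e. Mid k c0 e (fst x) (snd x))"
    proof (cases "p' = []")
      case True
      then have "p \<in> St k e" using pa pe p1 by (auto simp: St_mem allowed_Cons)
      then show ?thesis by blast
    next
      case False
      then obtain mid s2 where p2: "p' = mid @ [s2]" by (cases p' rule: rev_exhaust) auto
      define a where "a = nxt (int k) s1"
      define b where "b = endl a mid"
      have il: "ilev (int k) p = set (levels a mid)" using p1 p2 inter_mid a_def by simp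
      have ac: "int k + int c0 < a" using pi il h_in_levels by blast
      have bc: "int k + int c0 < b" using pi il endl_in_levels b_def by blast
      have s1ok: "step_ok Q L J (int k) s1" and mida: "allowed Q L J a mid"
        and s2ok: "step_ok Q L J b s2"
        using pa p1 p2 by (auto simp: allowed_Cons allowed_append a_def b_def)
      have e2: "nxt b s2 = e" using pe p1 p2 by (simp add: a_def b_def)
      obtain l1 j1 r1 where s1: "s1 = (l1, j1, r1)" by (cases s1)
      obtain l2 j2 r2 where s2: "s2 = (l2, j2, r2)" by (cases s2)
      have aL: "a \<le> int k + int L" using s1ok s1 a_def by auto
      have bJ: "b \<le> e + int J" using s2ok s2 e2 by auto
      define i1 where "i1 = nat (a - int k)"
      define i2 where "i2 = nat (b - int k)"
      have ai: "int (k + i1) = a" using ac i1_def by simp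
      have bi: "int (k + i2) = b" using bc i2_def by simp
      have box: "(i1, i2) \<in> Box k c0 e"
        using ai bi ac bc aL bJ by (auto simp: Box_def)
      have "[s1] \<in> St k (int (k + i1))" using s1ok ai a_def by (auto simp: St_mem)
      moreover have "mid \<in> FS (k + c0 + 1) (k + i1) (k + i2)"
        using mida ai bi b_def il pi by (auto simp: FS_def)
      moreover have "[s2] \<in> St (k + i2) e" using s2ok bi e2 by (auto simp: St_mem)
      ultimately have "([s1] @ mid) @ [s2] \<in> Mid k c0 e i1 i2"
        unfolding Mid_def by blast
      then show ?thesis using box p1 p2 by force
    qed
  qed
  show "St k e \<union> (\<Union>x\<in>Box k c0 e. Mid k c0 e (fst x) (snd x)) \<subseteq> PW k e (int k + int c0)"
  proof
    fix p assume "p \<in> St k e \<union> (\<Union>x\<in>Box k c0 e. Mid k c0 e (fst x) (snd x))"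
    then consider "p \<in> St k e" | i1 i2 where "(i1, i2) \<in> Box k c0 e" "p \<in> Mid k c0 e i1 i2" by auto
    then show "p \<in> PW k e (int k + int c0)"
    proof cases
      case 1
      then obtain s where "p = [s]" "step_ok Q L J (int k) s" "nxt (int k) s = e" by (auto simp: St_mem)
      then show ?thesis by (cases s) (auto simp: PW_def)
    next
      case 2
      then obtain s1 mid s2 where p: "p = ([s1] @ mid) @ [s2]" and s1: "[s1] \<in> St k (int (k + i1))"
        and mid: "mid \<in> FS (k + c0 + 1) (k + i1) (k + i2)" and s2: "[s2] \<in> St (k + i2) e"
        unfolding Mid_def by (auto simp: St_mem)
      have s1ok: "step_ok Q L J (int k) s1" "nxt (int k) s1 = int (k + i1)" using s1 by (auto simp: St_mem)
      have s2ok: "step_ok Q L J (int (k + i2)) s2" "nxt (int (k + i2)) s2 = e" using s2 by (auto simp: St_mem)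
      have ma: "allowed Q L J (int (k + i1)) mid" "endl (int (k + i1)) mid = int (k + i2)"
        "\<forall>h\<in>set (levels (int (k + i1)) mid). int (k + c0 + 1) \<le> h"
        using mid by (auto simp: FS_def)
      have "allowed Q L J (int k) p"
        using s1ok s2ok ma by (cases s2) (simp add: p allowed_Cons allowed_append)
      moreover have "endl (int k) p = e" using s1ok s2ok ma by (simp add: p)
      moreover have "ilev (int k) p = set (levels (int (k + i1)) mid)"
        using s1ok inter_mid[of "int k" s1 mid s2] by (simp add: p)
      ultimately show ?thesis using ma(3) by (fastforce simp: PW_def p)
    qed
  qed
qed

lemma inj_single_left: "inj_on cat (St k e \<times> T)"
  by (auto simp: inj_on_def St_def)

lemma inj_single_right: "inj_on cat (S \<times> St k e)"
  by (auto simp: inj_on_def St_def)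

lemma St_single: "St k e \<subseteq> {[s] | s. True}"
  by (auto simp: St_def)

lemma Mid_Good: "Mid k c0 e i1 i2 \<subseteq> Good L J"
  unfolding Mid_def by (intro cat_Good St_Good FS_Good)

lemma gf_Mid: "gf Q (Mid k c0 e i1 i2) =
   qk Q L J k (int i1) * Fge Q L J (k + c0 + 1) (k + i1) (k + i2) * qk Q L J (k + i2) (e - int (k + i2))"
proof -
  have "gf Q (Mid k c0 e i1 i2) = gf Q (cat ` (St k (int (k + i1)) \<times> FS (k + c0 + 1) (k + i1) (k + i2))) * gf Q (St (k + i2) e)"
    unfolding Mid_def
    by (intro gf_mult[of _ L J] cat_Good St_Good FS_Good inj_single_right)
  also have "\<dots> = gf Q (St k (int (k + i1))) * gf Q (FS (k + c0 + 1) (k + i1) (k + i2)) * gf Q (St (k + i2) e)"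
    by (subst gf_mult[of _ L J]) (auto intro: St_Good[THEN subsetD] FS_Good[THEN subsetD] inj_single_left)
  finally show ?thesis by (simp add: St_gf Fge_gf)
qed

lemma gf_PW:
  "gf Q (PW k e (int k + int c0)) = qk Q L J k (e - int k) +
    (\<Sum>x\<in>Box k c0 e. qk Q L J k (int (fst x)) * Fge Q L J (k + c0 + 1) (k + fst x) (k + snd x)
        * qk Q L J (k + snd x) (e - int (k + snd x)))"
proof -
  have disj1: "St k e \<inter> (\<Union>x\<in>Box k c0 e. Mid k c0 e (fst x) (snd x)) = {}"
    by (auto simp: Mid_def St_def)
  have disj2: "\<forall>x\<in>Box k c0 e. \<forall>y\<in>Box k c0 e. x \<noteq> y \<longrightarrow>
      Mid k c0 e (fst x) (snd x) \<inter> Mid k c0 e (fst y) (snd y) = {}"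
  proof (intro ballI impI)
    fix x y :: "nat \<times> nat" assume xy: "x \<noteq> y"
    obtain i1 i2 i1' i2' where x: "x = (i1, i2)" and y: "y = (i1', i2')" by (cases x, cases y)
    { fix u assume "u \<in> Mid k c0 e i1 i2" "u \<in> Mid k c0 e i1' i2'"
      then obtain s1 mid s2 s1' mid' s2' where
        u1: "u = ([s1] @ mid) @ [s2]" "nxt (int k) s1 = int (k + i1)" "endl (int (k + i1)) mid = int (k + i2)"
        and u2: "u = ([s1'] @ mid') @ [s2']" "nxt (int k) s1' = int (k + i1')" "endl (int (k + i1')) mid' = int (k + i2')"
        unfolding Mid_def by (auto simp: St_mem FS_def)
      then have "s1 = s1'" "mid = mid'" by auto
      then have False using u1 u2 xy x y by auto }
    then show "Mid k c0 e (fst x) (snd x) \<inter> Mid k c0 e (fst y) (snd y) = {}" using x y by auto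
  qed
  have "gf Q (PW k e (int k + int c0)) = gf Q (St k e) + gf Q (\<Union>x\<in>Box k c0 e. Mid k c0 e (fst x) (snd x))"
    unfolding PW_decomp
    by (rule gf_union[OF St_Good _ disj1]) (use Mid_Good in blast)
  also have "gf Q (\<Union>x\<in>Box k c0 e. Mid k c0 e (fst x) (snd x)) = (\<Sum>x\<in>Box k c0 e. gf Q (Mid k c0 e (fst x) (snd x)))"
    by (rule gf_UN[OF finite_Box _ disj2]) (use Mid_Good in blast)
  finally show ?thesis by (simp add: St_gf gf_Mid)
qed

lemma down_sum:
  assumes "k \<le> k1"
  shows "gf Q {u \<in> FS k k1 k2. \<exists>x\<in>tlset (int k1) u. x \<le> int k1} =
    (\<Sum>m=k..k1. Abar Q L J k1 (k1 - m) * Fge Q L J k m k2)"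
proof -
  have "gf Q {u \<in> FS k k1 k2. \<exists>x\<in>tlset (int k1) u. x \<le> int k1} =
     (\<Sum>m=k..k1. gf Q (PW k1 (int m) (int k1)) * gf Q (FS k m k2))"
    unfolding down_decomp[OF assms]
    apply (rule gf_UN_mult[where L=L and J=J])
      apply simp
     apply (auto intro: PW_Good[THEN subsetD] FS_Good[THEN subsetD] inj_down)[1]
    apply (intro ballI impI disj_down; auto)
    done
  also have "\<dots> = (\<Sum>m=k..k1. Abar Q L J k1 (k1 - m) * Fge Q L J k m k2)"
    by (rule sum.cong[OF refl]) (auto simp: Abar_gf Fge_gf of_nat_diff)
  finally show ?thesis .
qed

lemma up_sum:
  assumes "k \<le> k1"
  shows "gf Q {u \<in> FS k k1 k2. u \<noteq> [] \<and> (\<forall>x\<in>tlset (int k1) u. int k1 < x)} =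
    (\<Sum>m=k1+1..k2. Aprime Q L J k1 (m - k1) * Fge Q L J m m k2)"
proof -
  have "gf Q {u \<in> FS k k1 k2. u \<noteq> [] \<and> (\<forall>x\<in>tlset (int k1) u. int k1 < x)} =
     (\<Sum>m=k1+1..k2. gf Q (PW k1 (int m) (int m)) * gf Q (FS m m k2))"
    unfolding up_decomp[OF assms]
    apply (rule gf_UN_mult[where L=L and J=J])
      apply simp
     apply (auto intro: PW_Good[THEN subsetD] FS_Good[THEN subsetD] inj_up)[1]
    apply (intro ballI impI disj_up; auto)
    done
  also have "\<dots> = (\<Sum>m=k1+1..k2. Aprime Q L J k1 (m - k1) * Fge Q L J m m k2)"
    by (rule sum.cong[OF refl]) (auto simp: Aprime_gf Fge_gf of_nat_diff)
  finally show ?thesis .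
qed

lemma FS_Good': "A \<subseteq> FS k k1 k2 \<Longrightarrow> A \<subseteq> Good L J"
  using FS_Good by blast

lemma part_a:
  assumes "k \<le> k1"
  shows "Fge Q L J k k1 k1 = 1 + (\<Sum>m=k..k1. Abar Q L J k1 (k1 - m) * Fge Q L J k m k1)"
proof -
  have eq: "FS k k1 k1 = {[]} \<union> {u \<in> FS k k1 k1. \<exists>x\<in>tlset (int k1) u. x \<le> int k1}"
  proof
    show "FS k k1 k1 \<subseteq> {[]} \<union> {u \<in> FS k k1 k1. \<exists>x\<in>tlset (int k1) u. x \<le> int k1}"
    proof
      fix u assume u: "u \<in> FS k k1 k1"
      show "u \<in> {[]} \<union> {u \<in> FS k k1 k1. \<exists>x\<in>tlset (int k1) u. x \<le> int k1}"
      proof (cases "u = []")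
        case False
        then have "endl (int k1) u \<in> tlset (int k1) u" by (rule endl_in_tlset)
        then show ?thesis using u by (auto simp: FS_def)
      qed simp
    qed
    show "{[]} \<union> {u \<in> FS k k1 k1. \<exists>x\<in>tlset (int k1) u. x \<le> int k1} \<subseteq> FS k k1 k1"
      using assms by (auto simp: FS_def)
  qed
  have "Fge Q L J k k1 k1 = gf Q {[]} + gf Q {u \<in> FS k k1 k1. \<exists>x\<in>tlset (int k1) u. x \<le> int k1}"
    unfolding Fge_gf
    apply (subst eq, rule gf_union[of _ L J])
      apply (simp add: Good_def)
     apply (rule FS_Good', blast)
    apply auto
    done
  then show ?thesis by (simp add: gf_Nil down_sum[OF assms])
qed

lemma part_b:
  assumes "k \<le> k1" "k1 < k2"
  shows "Fge Q L J k k1 k2 = (\<Sum>m=k..k1. Abar Q L J k1 (k1 - m) * Fge Q L J k m k2)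
                        + (\<Sum>m=k1+1..k2. Aprime Q L J k1 (m - k1) * Fge Q L J m m k2)"
proof -
  have eq: "FS k k1 k2 = {u \<in> FS k k1 k2. \<exists>x\<in>tlset (int k1) u. x \<le> int k1} \<union>
      {u \<in> FS k k1 k2. u \<noteq> [] \<and> (\<forall>x\<in>tlset (int k1) u. int k1 < x)}"
  proof -
    have "\<And>u. u \<in> FS k k1 k2 \<Longrightarrow> u \<noteq> []" using assms by (auto simp: FS_def)
    then show ?thesis by (auto simp: not_le)
  qed
  have "Fge Q L J k k1 k2 = gf Q {u \<in> FS k k1 k2. \<exists>x\<in>tlset (int k1) u. x \<le> int k1} +
      gf Q {u \<in> FS k k1 k2. u \<noteq> [] \<and> (\<forall>x\<in>tlset (int k1) u. int k1 < x)}"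
    unfolding Fge_gf
    apply (subst eq, rule gf_union[of _ L J])
      apply (rule FS_Good', blast)
     apply (rule FS_Good', blast)
    apply auto
    done
  then show ?thesis by (simp add: down_sum[OF assms(1)] up_sum[OF assms(1)])
qed

lemma part_c:
  assumes "k \<le> k2" "k2 < k1"
  shows "Fge Q L J k k1 k2 = (\<Sum>m=k..k1. Abar Q L J k1 (k1 - m) * Fge Q L J k m k2)"
proof -
  have eq: "FS k k1 k2 = {u \<in> FS k k1 k2. \<exists>x\<in>tlset (int k1) u. x \<le> int k1}"
  proof -
    { fix u assume u: "u \<in> FS k k1 k2"
      then have "u \<noteq> []" using assms by (auto simp: FS_def)
      then have "endl (int k1) u \<in> tlset (int k1) u" by (rule endl_in_tlset)
      moreover have "endl (int k1) u \<le> int k1" using u assms by (simp add: FS_def)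
      ultimately have "\<exists>x\<in>tlset (int k1) u. x \<le> int k1" by blast }
    then show ?thesis by auto
  qed
  have "Fge Q L J k k1 k2 = gf Q (FS k k1 k2)" by (rule Fge_gf)
  also have "\<dots> = gf Q {u \<in> FS k k1 k2. \<exists>x\<in>tlset (int k1) u. x \<le> int k1}"
    by (rule arg_cong[where f="gf Q", OF eq])
  also have "\<dots> = (\<Sum>m=k..k1. Abar Q L J k1 (k1 - m) * Fge Q L J k m k2)"
    by (rule down_sum) (use assms in simp)
  finally show ?thesis .
qed

lemma qk_nz:
  assumes "qk Q L J k h \<noteq> 0"
  shows "\<exists>l j. l \<le> L \<and> j \<le> min k J \<and> int l - int j = h"
  using qk_zero assms by blast

lemma part_d:
  "Aprime Q L J k i = qk Q L J k (int i) +
         (\<Sum>(i1, i2) \<in> {(i1, i2). i < i1 \<and> i < i2 \<and>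
              qk Q L J k (int i1) * Fge Q L J (k + i + 1) (k + i1) (k + i2)
                * qk Q L J (k + i2) (- (int i2 - int i)) \<noteq> 0}.
            qk Q L J k (int i1) * Fge Q L J (k + i + 1) (k + i1) (k + i2)
              * qk Q L J (k + i2) (- (int i2 - int i)))"
proof -
  define f where "f = (\<lambda>(i1, i2). qk Q L J k (int i1) * Fge Q L J (k + i + 1) (k + i1) (k + i2)
              * qk Q L J (k + i2) (- (int i2 - int i)))"
  define NZ where "NZ = {(i1, i2). i < i1 \<and> i < i2 \<and>
              qk Q L J k (int i1) * Fge Q L J (k + i + 1) (k + i1) (k + i2)
                * qk Q L J (k + i2) (- (int i2 - int i)) \<noteq> 0}"
  have A: "Aprime Q L J k i = qk Q L J k (int i) + (\<Sum>x\<in>Box k i (int k + int i). f x)"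
  proof -
    have "Aprime Q L J k i = gf Q (PW k (int k + int i) (int k + int i))" by (rule Aprime_gf)
    also have "\<dots> = qk Q L J k (int k + int i - int k) +
    (\<Sum>x\<in>Box k i (int k + int i). qk Q L J k (int (fst x)) * Fge Q L J (k + i + 1) (k + fst x) (k + snd x)
        * qk Q L J (k + snd x) (int k + int i - int (k + snd x)))" by (rule gf_PW)
    also have "(\<Sum>x\<in>Box k i (int k + int i). qk Q L J k (int (fst x)) * Fge Q L J (k + i + 1) (k + fst x) (k + snd x)
        * qk Q L J (k + snd x) (int k + int i - int (k + snd x))) = (\<Sum>x\<in>Box k i (int k + int i). f x)"
      by (rule sum.cong[OF refl]) (simp add: f_def case_prod_beta)
    finally show ?thesis by simp
  qed
  have sub: "NZ \<subseteq> Box k i (int k + int i)"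
  proof
    fix x assume x: "x \<in> NZ"
    obtain i1 i2 where xe: "x = (i1, i2)" by (cases x)
    have "qk Q L J k (int i1) \<noteq> 0" "qk Q L J (k + i2) (- (int i2 - int i)) \<noteq> 0"
      using x xe by (auto simp: NZ_def)
    from qk_nz[OF this(1)] qk_nz[OF this(2)] show "x \<in> Box k i (int k + int i)"
      using x xe by (auto simp: NZ_def Box_def)
  qed
  have "(\<Sum>x\<in>Box k i (int k + int i). f x) = (\<Sum>x\<in>NZ. f x)"
    by (rule sum.mono_neutral_right[OF finite_Box sub]) (auto simp: NZ_def f_def Box_def)
  then show ?thesis using A by (simp add: NZ_def f_def)
qed

lemma part_e:
  "Abar Q L J k i = qk Q L J k (- int i) +
         (\<Sum>(i1, i2) \<in> {(i1, i2). 0 < i1 \<and> 0 < i2 \<and>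
              qk Q L J k (int i1) * Fge Q L J (k + 1) (k + i1) (k + i2)
                * qk Q L J (k + i2) (- (int i + int i2)) \<noteq> 0}.
            qk Q L J k (int i1) * Fge Q L J (k + 1) (k + i1) (k + i2)
              * qk Q L J (k + i2) (- (int i + int i2)))"
proof -
  define f where "f = (\<lambda>(i1, i2). qk Q L J k (int i1) * Fge Q L J (k + 1) (k + i1) (k + i2)
              * qk Q L J (k + i2) (- (int i + int i2)))"
  define NZ where "NZ = {(i1, i2). 0 < i1 \<and> 0 < i2 \<and>
              qk Q L J k (int i1) * Fge Q L J (k + 1) (k + i1) (k + i2)
                * qk Q L J (k + i2) (- (int i + int i2)) \<noteq> 0}"
  have A: "Abar Q L J k i = qk Q L J k (- int i) + (\<Sum>x\<in>Box k 0 (int k - int i). f x)"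
  proof -
    have "Abar Q L J k i = gf Q (PW k (int k - int i) (int k + int 0))" by (simp add: Abar_gf)
    also have "\<dots> = qk Q L J k (int k - int i - int k) +
    (\<Sum>x\<in>Box k 0 (int k - int i). qk Q L J k (int (fst x)) * Fge Q L J (k + 0 + 1) (k + fst x) (k + snd x)
        * qk Q L J (k + snd x) (int k - int i - int (k + snd x)))" by (rule gf_PW)
    also have "(\<Sum>x\<in>Box k 0 (int k - int i). qk Q L J k (int (fst x)) * Fge Q L J (k + 0 + 1) (k + fst x) (k + snd x)
        * qk Q L J (k + snd x) (int k - int i - int (k + snd x))) = (\<Sum>x\<in>Box k 0 (int k - int i). f x)"
      by (rule sum.cong[OF refl]) (simp add: f_def case_prod_beta)
    finally show ?thesis by simp
  qed
  have sub: "NZ \<subseteq> Box k 0 (int k - int i)"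
  proof
    fix x assume x: "x \<in> NZ"
    obtain i1 i2 where xe: "x = (i1, i2)" by (cases x)
    have "qk Q L J k (int i1) \<noteq> 0" "qk Q L J (k + i2) (- (int i + int i2)) \<noteq> 0"
      using x xe by (auto simp: NZ_def)
    from qk_nz[OF this(1)] qk_nz[OF this(2)] show "x \<in> Box k 0 (int k - int i)"
      using x xe by (auto simp: NZ_def Box_def)
  qed
  have "(\<Sum>x\<in>Box k 0 (int k - int i). f x) = (\<Sum>x\<in>NZ. f x)"
    by (rule sum.mono_neutral_right[OF finite_Box sub]) (auto simp: NZ_def f_def Box_def)
  then show ?thesis using A by (simp add: NZ_def f_def)
qed

end

theorem lemma2:
  fixes Q :: "nat \<Rightarrow> nat \<Rightarrow> real poly" and L J :: nat
  assumes nonneg: "\<forall>l\<le>L. \<forall>j\<le>J. \<forall>r. 0 \<le> coeff (Q l j) r"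
  shows
   "(\<forall>k k1. k \<le> k1 \<longrightarrow>
       Fge Q L J k k1 k1 = 1 + (\<Sum>m=k..k1. Abar Q L J k1 (k1 - m) * Fge Q L J k m k1))
  \<and> (\<forall>k k1 k2. k \<le> k1 \<and> k1 < k2 \<longrightarrow>
       Fge Q L J k k1 k2 = (\<Sum>m=k..k1. Abar Q L J k1 (k1 - m) * Fge Q L J k m k2)
                        + (\<Sum>m=k1+1..k2. Aprime Q L J k1 (m - k1) * Fge Q L J m m k2))
  \<and> (\<forall>k k1 k2. k \<le> k2 \<and> k2 < k1 \<longrightarrow>
       Fge Q L J k k1 k2 = (\<Sum>m=k..k1. Abar Q L J k1 (k1 - m) * Fge Q L J k m k2))
  \<and> (\<forall>k i. int i \<le> dup Q L J k \<longrightarrow>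
       Aprime Q L J k i = qk Q L J k (int i) +
         (\<Sum>(i1, i2) \<in> {(i1, i2). i < i1 \<and> i < i2 \<and>
              qk Q L J k (int i1) * Fge Q L J (k + i + 1) (k + i1) (k + i2)
                * qk Q L J (k + i2) (- (int i2 - int i)) \<noteq> 0}.
            qk Q L J k (int i1) * Fge Q L J (k + i + 1) (k + i1) (k + i2)
              * qk Q L J (k + i2) (- (int i2 - int i))))
  \<and> (\<forall>k i. int i \<le> ddown Q L J k \<longrightarrow>
       Abar Q L J k i = qk Q L J k (- int i) +
         (\<Sum>(i1, i2) \<in> {(i1, i2). 0 < i1 \<and> 0 < i2 \<and>
              qk Q L J k (int i1) * Fge Q L J (k + 1) (k + i1) (k + i2)
                * qk Q L J (k + i2) (- (int i + int i2)) \<noteq> 0}.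
            qk Q L J k (int i1) * Fge Q L J (k + 1) (k + i1) (k + i2)
              * qk Q L J (k + i2) (- (int i + int i2))))"
  apply (intro conjI allI impI)
  subgoal by (rule part_a) simp
  subgoal by (rule part_b) auto
  subgoal by (rule part_c) auto
  subgoal by (rule part_d)
  subgoal by (rule part_e)
  done

end
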